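(* Let $T$ be a $C_{p^rq^s}$-transfer system with exactly two connected components. If the connected component of $(0,0)$ equals $H_k$ for some $0<k<s$, or equals $V_\ell$ for some $0<\ell<r$, then $T$ is not lesser simply paired.
   Context: $p,q$ are distinct primes and $r,s\ge 0$ integers. The subgroups of $C_{p^rq^s}$ are identified with grid points $(i,j)$, $0\le i\le r$, $0\le j\le s$, where $(i,j)$ stands for $C_{p^iq^j}$ (intersection is coordinatewise minimum). A $C_{p^rq^s}$-transfer system is a partial order $\to$ on these vertices such that: $(i_1,j_1)\to(i_2,j_2)$ implies $i_1\le i_2$, $j_1\le j_2$; it is reflexive and transitive; and $(i_1,j_1)\to(i_2,j_2)$ implies $(\min\{i_1,a\},\min\{j_1,b\})\to(\min\{i_2,a\},\min\{j_2,b\})$ for every vertex $(a,b)$. Connected components are those of the underlying undirected graph. $V_\ell=\{(i,j): 0\le i\le \ell,\ 0\le j\le s\}$, $H_k=\{(i,j): 0\le i\le r,\ 0\le j\le k\}$. A transfer system is saturated if whenever $L\le K\le H$ and $L\to H$ is in it then $K\to H$ is in it; $\mathrm{Hull}(T)$ is the smallest saturated transfer system containing $T$; $T_c$ is the complete transfer system. A pair $(T,T')$ is compatible if $T\subseteq T'$ and for all subgroups $A,B,C$ with $B,C\le A$: if $B\to A$ is in $T$ and $B\cap C\to B$ is in $T'$ then $C\to A$ is in $T'$. $T$ is lesser simply paired if for every transfer system $T'\supseteq T$, $(T,T')$ is compatible iff $T'\in\{\mathrm{Hull}(T),T_c\}$. *)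

theory Defs
  imports Main
begin

text \<open>Subgroups of C_{p^r q^s} are modelled by grid points (i,j) with i \<le> r, j \<le> s;
 (i,j) stands for C_{p^i q^j}. Inclusion is coordinatewise order, intersection is
 coordinatewise minimum.\<close>

type_synonym vtx = "nat \<times> nat"

definition verts :: "nat \<Rightarrow> nat \<Rightarrow> vtx set" where
  "verts r s = {(i, j). i \<le> r \<and> j \<le> s}"

definition sub :: "vtx \<Rightarrow> vtx \<Rightarrow> bool" where
  "sub x y \<longleftrightarrow> fst x \<le> fst y \<and> snd x \<le> snd y"

definition meet :: "vtx \<Rightarrow> vtx \<Rightarrow> vtx" where
  "meet x y = (min (fst x) (fst y), min (snd x) (snd y))"

definition transfer_system :: "nat \<Rightarrow> nat \<Rightarrow> vtx rel \<Rightarrow> bool" where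
  "transfer_system r s T \<longleftrightarrow>
     T \<subseteq> verts r s \<times> verts r s \<and>
     (\<forall>(x, y) \<in> T. sub x y) \<and>
     (\<forall>x \<in> verts r s. (x, x) \<in> T) \<and>
     trans T \<and>
     (\<forall>(x, y) \<in> T. \<forall>v \<in> verts r s. (meet x v, meet y v) \<in> T)"

definition saturated :: "nat \<Rightarrow> nat \<Rightarrow> vtx rel \<Rightarrow> bool" where
  "saturated r s T \<longleftrightarrow>
     (\<forall>L \<in> verts r s. \<forall>K \<in> verts r s. \<forall>H \<in> verts r s.
        sub L K \<and> sub K H \<and> (L, H) \<in> T \<longrightarrow> (K, H) \<in> T)"

definition Hull :: "nat \<Rightarrow> nat \<Rightarrow> vtx rel \<Rightarrow> vtx rel" where
  "Hull r s T = \<Inter>{T'. transfer_system r s T' \<and> saturated r s T' \<and> T \<subseteq> T'}"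

definition complete_ts :: "nat \<Rightarrow> nat \<Rightarrow> vtx rel" where
  "complete_ts r s = {(x, y). x \<in> verts r s \<and> y \<in> verts r s \<and> sub x y}"

definition compatible :: "nat \<Rightarrow> nat \<Rightarrow> vtx rel \<Rightarrow> vtx rel \<Rightarrow> bool" where
  "compatible r s T T' \<longleftrightarrow> T \<subseteq> T' \<and>
     (\<forall>A \<in> verts r s. \<forall>B \<in> verts r s. \<forall>C \<in> verts r s.
        sub B A \<and> sub C A \<and> (B, A) \<in> T \<and> (meet B C, B) \<in> T' \<longrightarrow> (C, A) \<in> T')"

definition lesser_simply_paired :: "nat \<Rightarrow> nat \<Rightarrow> vtx rel \<Rightarrow> bool" where
  "lesser_simply_paired r s T \<longleftrightarrow>
     (\<forall>T'. transfer_system r s T' \<and> T \<subseteq> T' \<longrightarrow>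
        (compatible r s T T' \<longleftrightarrow> (T' = Hull r s T \<or> T' = complete_ts r s)))"

definition component :: "nat \<Rightarrow> nat \<Rightarrow> vtx rel \<Rightarrow> vtx \<Rightarrow> vtx set" where
  "component r s T x = {y \<in> verts r s. (x, y) \<in> (T \<union> T\<inverse>)\<^sup>*}"

definition components :: "nat \<Rightarrow> nat \<Rightarrow> vtx rel \<Rightarrow> vtx set set" where
  "components r s T = component r s T ` verts r s"

definition Hset :: "nat \<Rightarrow> nat \<Rightarrow> vtx set" where
  "Hset r k = {(i, j). i \<le> r \<and> j \<le> k}"

definition Vset :: "nat \<Rightarrow> nat \<Rightarrow> vtx set" where
  "Vset l s = {(i, j). i \<le> l \<and> j \<le> s}"

end

theory Submission
  imports Defs
begin

lemma comp_closed:
  assumes ts: "transfer_system r s T" and c: "component r s T (0, 0) = S"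
    and xy: "(x, y) \<in> T" and xS: "x \<in> S"
  shows "y \<in> S"
proof -
  have yv: "y \<in> verts r s" using ts xy unfolding transfer_system_def by blast
  have "((0,0), x) \<in> (T \<union> T\<inverse>)\<^sup>*" using xS c unfolding component_def by blast
  moreover have "(x, y) \<in> (T \<union> T\<inverse>)\<^sup>*" using xy by blast
  ultimately have "((0,0), y) \<in> (T \<union> T\<inverse>)\<^sup>*" by (rule rtrancl_trans)
  thus ?thesis using yv c unfolding component_def by blast
qed

lemma Hcase:
  assumes ts: "transfer_system r s T" and k: "0 < k" "k < s"
    and c: "component r s T (0, 0) = Hset r k"
  shows "\<not> lesser_simply_paired r s T"
proof -
  define T1 where "T1 = {(x,y). x \<in> verts r s \<and> y \<in> verts r s \<and> sub x y \<and> (snd x \<le> k \<longleftrightarrow> snd y \<le> k)}"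
  define T2 where "T2 = {(x,y). x \<in> verts r s \<and> y \<in> verts r s \<and> sub x y \<and> (snd x \<le> k \<and> \<not> snd y \<le> k \<longrightarrow> snd x = 0)}"
  have TT1: "T \<subseteq> T1"
  proof
    fix p assume p: "p \<in> T"
    obtain x y where pxy: "p = (x,y)" by (cases p)
    have xy: "x \<in> verts r s" "y \<in> verts r s" "sub x y" using ts p pxy unfolding transfer_system_def by auto
    have "x \<in> Hset r k \<Longrightarrow> y \<in> Hset r k" using comp_closed[OF ts c] p pxy by blast
    then show "p \<in> T1" using xy pxy unfolding T1_def Hset_def verts_def sub_def by auto
  qed
  have T1T2: "T1 \<subseteq> T2" unfolding T1_def T2_def by auto
  have ts1: "transfer_system r s T1"
    unfolding transfer_system_def T1_def trans_def
    by (auto simp: verts_def sub_def meet_def min_def)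
  have sat1: "saturated r s T1"
    unfolding saturated_def T1_def by (auto simp: verts_def sub_def)
  have ts2: "transfer_system r s T2"
    unfolding transfer_system_def T2_def trans_def
    by (auto simp: verts_def sub_def meet_def min_def)
  have comp2: "compatible r s T T2"
    unfolding compatible_def
  proof (intro conjI ballI impI)
    show "T \<subseteq> T2" using TT1 T1T2 by blast
  next
    fix A B C assume v: "A \<in> verts r s" "B \<in> verts r s" "C \<in> verts r s"
      and h: "sub B A \<and> sub C A \<and> (B, A) \<in> T \<and> (meet B C, B) \<in> T2"
    have "(B, A) \<in> T1" using h TT1 by blast
    then show "(C, A) \<in> T2" using h v unfolding T1_def T2_def
      by (auto simp: verts_def sub_def meet_def min_def split: if_splits)
  qed
  have hull: "Hull r s T \<subseteq> T1" unfolding Hull_def using ts1 sat1 TT1 by blast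
  have in2: "((0,0),(0,s)) \<in> T2" using k unfolding T2_def by (auto simp: verts_def sub_def)
  have nin1: "((0,0),(0,s)) \<notin> T1" using k unfolding T1_def by auto
  have ne1: "T2 \<noteq> Hull r s T" using hull in2 nin1 by blast
  have ne2: "T2 \<noteq> complete_ts r s"
  proof
    assume "T2 = complete_ts r s"
    moreover have "((0,1),(0,s)) \<in> complete_ts r s" using k
      unfolding complete_ts_def by (auto simp: verts_def sub_def)
    moreover have "((0,1),(0,s)) \<notin> T2" using k unfolding T2_def by auto
    ultimately show False by blast
  qed
  show ?thesis unfolding lesser_simply_paired_def
    using ts2 TT1 T1T2 comp2 ne1 ne2 by blast
qed

lemma Vcase:
  assumes ts: "transfer_system r s T" and k: "0 < k" "k < r"
    and c: "component r s T (0, 0) = Vset k s"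
  shows "\<not> lesser_simply_paired r s T"
proof -
  define T1 where "T1 = {(x,y). x \<in> verts r s \<and> y \<in> verts r s \<and> sub x y \<and> (fst x \<le> k \<longleftrightarrow> fst y \<le> k)}"
  define T2 where "T2 = {(x,y). x \<in> verts r s \<and> y \<in> verts r s \<and> sub x y \<and> (fst x \<le> k \<and> \<not> fst y \<le> k \<longrightarrow> fst x = 0)}"
  have TT1: "T \<subseteq> T1"
  proof
    fix p assume p: "p \<in> T"
    obtain x y where pxy: "p = (x,y)" by (cases p)
    have xy: "x \<in> verts r s" "y \<in> verts r s" "sub x y" using ts p pxy unfolding transfer_system_def by auto
    have "x \<in> Vset k s \<Longrightarrow> y \<in> Vset k s" using comp_closed[OF ts c] p pxy by blast
    then show "p \<in> T1" using xy pxy unfolding T1_def Vset_def verts_def sub_def by auto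
  qed
  have T1T2: "T1 \<subseteq> T2" unfolding T1_def T2_def by auto
  have ts1: "transfer_system r s T1"
    unfolding transfer_system_def T1_def trans_def
    by (auto simp: verts_def sub_def meet_def min_def)
  have sat1: "saturated r s T1"
    unfolding saturated_def T1_def by (auto simp: verts_def sub_def)
  have ts2: "transfer_system r s T2"
    unfolding transfer_system_def T2_def trans_def
    by (auto simp: verts_def sub_def meet_def min_def)
  have comp2: "compatible r s T T2"
    unfolding compatible_def
  proof (intro conjI ballI impI)
    show "T \<subseteq> T2" using TT1 T1T2 by blast
  next
    fix A B C assume v: "A \<in> verts r s" "B \<in> verts r s" "C \<in> verts r s"
      and h: "sub B A \<and> sub C A \<and> (B, A) \<in> T \<and> (meet B C, B) \<in> T2"
    have "(B, A) \<in> T1" using h TT1 by blast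
    then show "(C, A) \<in> T2" using h v unfolding T1_def T2_def
      by (auto simp: verts_def sub_def meet_def min_def split: if_splits)
  qed
  have hull: "Hull r s T \<subseteq> T1" unfolding Hull_def using ts1 sat1 TT1 by blast
  have in2: "((0,0),(r,0)) \<in> T2" using k unfolding T2_def by (auto simp: verts_def sub_def)
  have nin1: "((0,0),(r,0)) \<notin> T1" using k unfolding T1_def by auto
  have ne1: "T2 \<noteq> Hull r s T" using hull in2 nin1 by blast
  have ne2: "T2 \<noteq> complete_ts r s"
  proof
    assume "T2 = complete_ts r s"
    moreover have "((1,0),(r,0)) \<in> complete_ts r s" using k
      unfolding complete_ts_def by (auto simp: verts_def sub_def)
    moreover have "((1,0),(r,0)) \<notin> T2" using k unfolding T2_def by auto
    ultimately show False by blast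
  qed
  show ?thesis unfolding lesser_simply_paired_def
    using ts2 TT1 T1T2 comp2 ne1 ne2 by blast
qed

theorem mainTheorem14:
  fixes r s :: nat and T :: "vtx rel"
  assumes "transfer_system r s T"
    and "card (components r s T) = 2"
    and "(\<exists>k. 0 < k \<and> k < s \<and> component r s T (0, 0) = Hset r k)
       \<or> (\<exists>l. 0 < l \<and> l < r \<and> component r s T (0, 0) = Vset l s)"
  shows "\<not> lesser_simply_paired r s T"
  using assms(3) Hcase[OF assms(1)] Vcase[OF assms(1)] by blast

end
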